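(* For all integers $n,k_1,k_2\geq 2$, one has $\mathsf{Cube}_{n,k_1}\Rightarrow_{\mathsf{lex}}\mathsf{Cube}_{n,k_2}$ and $\mathsf{Cube}_{n,k_2}\Rightarrow_{\mathsf{lex}}\mathsf{Cube}_{n,k_1}$; i.e., a finitely complete category has $\mathsf{Cube}_{n,k_1}$-closed relations if and only if it has $\mathsf{Cube}_{n,k_2}$-closed relations.
   Context: A simple extended matrix $M$ (with parameters $n\geq 1$, $m\geq 0$, $k\geq 1$) is an $n\times(m+1)$ array $\left[ x_{ij} \mid y_i\right]$ whose entries $x_{ij}$ ($1\le i\le n$, $1\le j\le m$) and $y_i$ are (not necessarily distinct) variables from $\{x_1,\dots,x_k\}$; the first $m$ columns are the left columns and the last column is the right column. In a finitely complete category $\mathbb{C}$, an internal $n$-ary relation $r\colon R\rightarrowtail A^n$ (a monomorphism) is $M$-closed if for every object $B$ and every function $f\colon\{x_1,\dots,x_k\}\to\mathbb{C}(B,A)$ such that, for each $j\in\{1,\dots,m\}$, the morphism $(f(x_{1j}),\dots,f(x_{nj}))\colon B\to A^n$ factors through $r$, the morphism $(f(y_1),\dots,f(y_n))\colon B\to A^n$ also factors through $r$. $\mathbb{C}$ has $M$-closed relations if every internal $n$-ary relation is $M$-closed. $M_1\Rightarrow_{\mathsf{lex}}M_2$ means every finitely complete category with $M_1$-closed relations has $M_2$-closed relations. For integers $n,k\geq 2$, $\mathsf{Cube}_{n,k}$ is the simple extended matrix with $n$ rows and variables $\{x_1,\dots,x_k\}$ whose $k^n-1$ left columns are all the $n$-tuples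 of elements of $\{x_1,\dots,x_k\}$ except $(x_1,\dots,x_1)$, and whose right column is $(x_1,\dots,x_1)$. *)

theory Defs
  imports Main
begin

text \<open>A category whose objects are all elements of type 'o and whose morphisms
  are all elements of type 'm.  Composition cmp f g means f after g and is only
  meaningful when cod g = dom f.\<close>

record ('o, 'm) category =
  dom :: "'m \<Rightarrow> 'o"
  cod :: "'m \<Rightarrow> 'o"
  cmp :: "'m \<Rightarrow> 'm \<Rightarrow> 'm"
  ide :: "'o \<Rightarrow> 'm"

definition hom :: "('o, 'm) category \<Rightarrow> 'o \<Rightarrow> 'o \<Rightarrow> 'm set" where
  "hom C a b = {f. dom C f = a \<and> cod C f = b}"

definition is_category :: "('o, 'm) category \<Rightarrow> bool" where
  "is_category C \<longleftrightarrow>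
     (\<forall>a. ide C a \<in> hom C a a) \<and>
     (\<forall>f g. cod C g = dom C f \<longrightarrow> cmp C f g \<in> hom C (dom C g) (cod C f)) \<and>
     (\<forall>f. cmp C f (ide C (dom C f)) = f \<and> cmp C (ide C (cod C f)) f = f) \<and>
     (\<forall>f g h. cod C h = dom C g \<and> cod C g = dom C f \<longrightarrow>
         cmp C f (cmp C g h) = cmp C (cmp C f g) h)"

definition is_mono :: "('o, 'm) category \<Rightarrow> 'm \<Rightarrow> bool" where
  "is_mono C f \<longleftrightarrow>
     (\<forall>g h. cod C g = dom C f \<and> cod C h = dom C f \<and> dom C g = dom C h \<and>
        cmp C f g = cmp C f h \<longrightarrow> g = h)"

definition is_terminal :: "('o, 'm) category \<Rightarrow> 'o \<Rightarrow> bool" where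
  "is_terminal C t \<longleftrightarrow> (\<forall>a. \<exists>!f. f \<in> hom C a t)"

definition is_pullback ::
  "('o, 'm) category \<Rightarrow> 'm \<Rightarrow> 'm \<Rightarrow> 'o \<Rightarrow> 'm \<Rightarrow> 'm \<Rightarrow> bool" where
  "is_pullback C f g P p q \<longleftrightarrow>
     p \<in> hom C P (dom C f) \<and> q \<in> hom C P (dom C g) \<and> cmp C f p = cmp C g q \<and>
     (\<forall>X u v. u \<in> hom C X (dom C f) \<and> v \<in> hom C X (dom C g) \<and> cmp C f u = cmp C g v \<longrightarrow>
        (\<exists>!w. w \<in> hom C X P \<and> cmp C p w = u \<and> cmp C q w = v))"

text \<open>Finitely complete: a terminal object and all pullbacks
  (equivalent to having all finite limits).\<close>
definition finitely_complete :: "('o, 'm) category \<Rightarrow> bool" where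
  "finitely_complete C \<longleftrightarrow>
     (\<exists>t. is_terminal C t) \<and>
     (\<forall>f g. cod C f = cod C g \<longrightarrow> (\<exists>P p q. is_pullback C f g P p q))"

definition is_power :: "('o, 'm) category \<Rightarrow> 'o \<Rightarrow> nat \<Rightarrow> 'o \<Rightarrow> (nat \<Rightarrow> 'm) \<Rightarrow> bool" where
  "is_power C A n P p \<longleftrightarrow>
     (\<forall>i<n. p i \<in> hom C P A) \<and>
     (\<forall>B fs. (\<forall>i<n. fs i \<in> hom C B A) \<longrightarrow>
        (\<exists>!u. u \<in> hom C B P \<and> (\<forall>i<n. cmp C (p i) u = fs i)))"

definition factors_through ::
  "('o, 'm) category \<Rightarrow> nat \<Rightarrow> (nat \<Rightarrow> 'm) \<Rightarrow> 'm \<Rightarrow> 'o \<Rightarrow> (nat \<Rightarrow> 'm) \<Rightarrow> bool" where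
  "factors_through C n p r B fs \<longleftrightarrow>
     (\<exists>g. g \<in> hom C B (dom C r) \<and> (\<forall>i<n. cmp C (p i) (cmp C r g) = fs i))"

text \<open>C has M-closed relations, for the simple extended matrix M with n rows,
  m left columns and variables x_0, ..., x_(k-1) (0-indexed): entry x_{ij} is the
  variable with index X i j, entry y_i the variable with index Y i.\<close>
definition has_closed_relations ::
  "('o, 'm) category \<Rightarrow> nat \<Rightarrow> nat \<Rightarrow> nat \<Rightarrow> (nat \<Rightarrow> nat \<Rightarrow> nat) \<Rightarrow> (nat \<Rightarrow> nat) \<Rightarrow> bool" where
  "has_closed_relations C n m k X Y \<longleftrightarrow>
     (\<forall>A P p r. is_power C A n P p \<and> cod C r = P \<and> is_mono C r \<longrightarrow>
        (\<forall>B f. (\<forall>v<k. f v \<in> hom C B A) \<longrightarrow>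
           (\<forall>j<m. factors_through C n p r B (\<lambda>i. f (X i j))) \<longrightarrow>
           factors_through C n p r B (\<lambda>i. f (Y i))))"

text \<open>Cube_{n,k}: left column j (j < k^n - 1) is the tuple of base-k digits of j+1,
  which enumerates all n-tuples over {x_0..x_(k-1)} except (x_0,...,x_0);
  the right column is (x_0,...,x_0).\<close>
definition cube_left :: "nat \<Rightarrow> nat \<Rightarrow> nat \<Rightarrow> nat" where
  "cube_left k i j = ((j + 1) div k ^ i) mod k"

definition has_cube_closed_relations :: "('o, 'm) category \<Rightarrow> nat \<Rightarrow> nat \<Rightarrow> bool" where
  "has_cube_closed_relations C n k \<longleftrightarrow>
     has_closed_relations C n (k ^ n - 1) k (cube_left k) (\<lambda>i. 0)"

end

theory Submission
  imports Defs
begin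

lemma digits_zero:
  fixes k :: nat
  assumes "k \<ge> 2"
  shows "M < k ^ n \<Longrightarrow> (\<forall>i<n. (M div k ^ i) mod k = 0) \<Longrightarrow> M = 0"
proof (induction n arbitrary: M)
  case 0
  then show ?case by simp
next
  case (Suc n)
  have m0: "M mod k = 0" using Suc.prems(2)[rule_format, of 0] by simp
  have "M div k < k ^ n" using Suc.prems(1) assms
    by (simp add: less_mult_imp_div_less mult.commute)
  moreover have "\<forall>i<n. (M div k div k ^ i) mod k = 0"
  proof (intro allI impI)
    fix i assume "i < n"
    then have "(M div k ^ Suc i) mod k = 0" using Suc.prems(2) by blast
    then show "(M div k div k ^ i) mod k = 0" by (metis div_mult2_eq power_Suc)
  qed
  ultimately have "M div k = 0" using Suc.IH by blast
  have "M = M div k * k + M mod k" by simp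
  also have "\<dots> = 0" using m0 \<open>M div k = 0\<close> by simp
  finally show ?case .
qed

lemma digits_exist:
  fixes k :: nat
  assumes "k \<ge> 2"
  shows "(\<forall>i<n. t i < k) \<Longrightarrow>
    (\<Sum>i<n. t i * k ^ i) < k ^ n \<and> (\<forall>i<n. ((\<Sum>i<n. t i * k ^ i) div k ^ i) mod k = t i)"
proof (induction n)
  case 0
  then show ?case by simp
next
  case (Suc n)
  define N where "N = (\<Sum>i<n. t i * k ^ i)"
  have IH: "N < k ^ n" "\<forall>i<n. (N div k ^ i) mod k = t i"
    using Suc N_def by auto
  have tn: "t n < k" using Suc.prems by simp
  have S: "(\<Sum>i<Suc n. t i * k ^ i) = N + t n * k ^ n" by (simp add: N_def)
  have bound: "N + t n * k ^ n < k ^ Suc n"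
  proof -
    have "t n \<le> k - 1" using tn by simp
    then have "t n * k ^ n \<le> (k - 1) * k ^ n" by simp
    moreover have "(k - 1) * k ^ n + k ^ n = k ^ Suc n" using assms
      by (simp add: algebra_simps)
    ultimately show ?thesis using IH(1) by linarith
  qed
  have dig: "((N + t n * k ^ n) div k ^ i) mod k = t i" if "i < Suc n" for i
  proof (cases "i = n")
    case True
    have kp: "k ^ n > 0" using assms by simp
    have "(N + t n * k ^ n) div k ^ n = N div k ^ n + t n"
      using kp by simp
    also have "N div k ^ n = 0" using IH(1) by simp
    finally have "(N + t n * k ^ n) div k ^ n = t n" by simp
    then show ?thesis using True tn by simp
  next
    case False
    then have i: "i < n" using that by simp
    have kpos: "k ^ i > 0" using assms by simp
    have "k ^ n = k ^ i * k ^ (n - i)" using i by (simp add: power_add[symmetric])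
    then have "t n * k ^ n = (t n * k ^ (n - i)) * k ^ i" by simp
    then have "(N + t n * k ^ n) div k ^ i = (N + (t n * k ^ (n - i)) * k ^ i) div k ^ i"
      by (rule arg_cong[where f="\<lambda>x. (N + x) div k ^ i"])
    also have "\<dots> = N div k ^ i + t n * k ^ (n - i)"
      using kpos by (metis div_mult_self1 add.commute neq0_conv)
    finally have "(N + t n * k ^ n) div k ^ i = N div k ^ i + t n * k ^ (n - i)" .
    moreover have "k dvd t n * k ^ (n - i)" using i by (simp add: dvd_mult)
    ultimately have "((N + t n * k ^ n) div k ^ i) mod k = (N div k ^ i) mod k"
      by (metis mod_add_right_eq dvd_imp_mod_0 add_0_right mod_add_left_eq mod_mod_trivial)
    then show ?thesis using IH(2) i by simp
  qed
  show ?case unfolding S using bound dig by blast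
qed

lemma factors_cong:
  "(\<forall>i<n. fs i = gs i) \<Longrightarrow> factors_through C n p r B fs = factors_through C n p r B gs"
  unfolding factors_through_def by auto

lemma cube_imp:
  assumes k1: "k1 \<ge> 2" and k2: "k2 \<ge> 2"
    and H: "has_cube_closed_relations C n k2"
  shows "has_cube_closed_relations C n k1"
  unfolding has_cube_closed_relations_def has_closed_relations_def
proof (intro allI impI)
  fix A P p r B f
  assume R: "is_power C A n P p \<and> cod C r = P \<and> is_mono C r"
    and fh: "\<forall>v<k1. f v \<in> hom C B A"
    and cols: "\<forall>j<k1 ^ n - 1. factors_through C n p r B (\<lambda>i. f (cube_left k1 i j))"
  define g where "g v = f (if v < k1 then v else 1)" for v
  have gh: "\<forall>v<k2. g v \<in> hom C B A" using fh k1 by (simp add: g_def)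
  have gcols: "\<forall>j<k2 ^ n - 1. factors_through C n p r B (\<lambda>i. g (cube_left k2 i j))"
  proof (intro allI impI)
    fix j assume j: "j < k2 ^ n - 1"
    define t where "t i = (if cube_left k2 i j < k1 then cube_left k2 i j else 1)" for i
    have tk: "\<forall>i<n. t i < k1" using k1 by (simp add: t_def)
    have nz: "\<exists>i<n. t i \<noteq> 0"
    proof (rule ccontr)
      assume "\<not> ?thesis"
      then have "\<forall>i<n. ((j+1) div k2 ^ i) mod k2 = 0"
        by (auto simp: t_def cube_left_def split: if_splits)
      moreover have "j + 1 < k2 ^ n" using j by simp
      ultimately have "j + 1 = 0" using digits_zero[OF k2] by blast
      then show False by simp
    qed
    define N where "N = (\<Sum>i<n. t i * k1 ^ i)"
    have D: "N < k1 ^ n" "\<forall>i<n. (N div k1 ^ i) mod k1 = t i"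
      using digits_exist[OF k1 tk] N_def by auto
    obtain i0 where i0: "i0 < n" "t i0 \<noteq> 0" using nz by blast
    have "N \<noteq> 0" using D(2) i0 by (metis div_0 mod_0)
    then obtain j' where j': "N = j' + 1" by (metis Suc_eq_plus1 not0_implies_Suc)
    have j'b: "j' < k1 ^ n - 1" using D(1) j' by simp
    have F1: "factors_through C n p r B (\<lambda>i. f (cube_left k1 i j'))" using cols j'b by blast
    have eq: "\<forall>i<n. f (cube_left k1 i j') = g (cube_left k2 i j)"
    proof (intro allI impI)
      fix i assume i: "i < n"
      have c1: "cube_left k1 i j' = t i" using D(2) i j' unfolding cube_left_def by simp
      have "g (cube_left k2 i j) = f (t i)" unfolding g_def t_def by simp
      then show "f (cube_left k1 i j') = g (cube_left k2 i j)" using c1 by simp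
    qed
    show "factors_through C n p r B (\<lambda>i. g (cube_left k2 i j))"
      by (rule iffD1[OF factors_cong[OF eq] F1])
  qed
  have Hu: "\<forall>A P p r. is_power C A n P p \<and> cod C r = P \<and> is_mono C r \<longrightarrow>
        (\<forall>B f. (\<forall>v<k2. f v \<in> hom C B A) \<longrightarrow>
           (\<forall>j<k2 ^ n - 1. factors_through C n p r B (\<lambda>i. f (cube_left k2 i j))) \<longrightarrow>
           factors_through C n p r B (\<lambda>i. f 0))"
    using H unfolding has_cube_closed_relations_def has_closed_relations_def .
  have "factors_through C n p r B (\<lambda>i. g 0)"
    using mp[OF mp[OF spec[OF spec[OF mp[OF spec[OF spec[OF spec[OF spec[OF Hu, of A], of P], of p], of r] R], of B], of g] gh] gcols] .
  then show "factors_through C n p r B (\<lambda>i. f 0)" using k1 by (simp add: g_def)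
qed

theorem corollary2p2:
  fixes C :: "('o, 'm) category" and n k1 k2 :: nat
  assumes "n \<ge> 2" and "k1 \<ge> 2" and "k2 \<ge> 2"
    and "is_category C" and "finitely_complete C"
  shows "has_cube_closed_relations C n k1 \<longleftrightarrow> has_cube_closed_relations C n k2"
  using cube_imp assms(2,3) by blast

end
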